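(* Let $V$ be a finite ground set partitioned into groups $V_1,\dots,V_m$, $\alpha$ a nonnegative integer, $c$ a positive integer, $f:2^V\to\mathbb{R}_{\ge0}$ submodular, and let $OPT$ be an optimal solution of Problem P.2 (defined in the context). Let $z=\min_{i\in[m]}\lfloor|OPT\cap V_i|/2\rfloor$. Let $A^{P22}$ be any feasible solution of Problem P.2.2 and let $A^{\mathsf{final}}$ be obtained from it by the completion step described in the context. Then $A^{\mathsf{final}}$ is a feasible solution of Problem P.2.1, and hence of Problem P.2.
   Context: Problem P.2: maximize $f(S)$ over $S\subseteq V$ with $|S\cap V_i|-|S\cap V_j|\le\alpha$ for all $i,j\in[m]$ and $|S|\le c$. Problem P.2.1: maximize $f(S)$ subject to $z\le|S\cap V_i|\le z+\alpha$ for all $i\in[m]$ and $|S|\le c$. Problem P.2.2: maximize $f(S)$ subject to $|S\cap V_i|\le z+\alpha$ for all $i$ and $\sum_{i\in[m]}\max\{z,|S\cap V_i|\}\le c$. Completion step: let $L=\{i:|A^{P22}\cap V_i|<z\}$; for each $i\in L$ pick arbitrary disjoint $X_i,Y_i\subseteq V_i\setminus A^{P22}$ with $|X_i|=|Y_i|=z-|A^{P22}\cap V_i|$; let $A^1=A^{P22}\cup\bigcup_{i\in L}X_i$, $A^2=A^{P22}\cup\bigcup_{i\in L}Y_i$, and $A^{\mathsf{final}}$ is the one of $A^1,A^2$ with larger $f$-value. *)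

theory Defs
  imports Complex_Main
begin

text \<open>Groups are indexed by [m] = {1..m}; Vg i is the group V_i.\<close>

definition is_partition :: "'a set \<Rightarrow> nat \<Rightarrow> (nat \<Rightarrow> 'a set) \<Rightarrow> bool" where
  "is_partition V m Vg \<longleftrightarrow>
     (\<Union>i\<in>{1..m}. Vg i) = V \<and>
     (\<forall>i\<in>{1..m}. \<forall>j\<in>{1..m}. i \<noteq> j \<longrightarrow> Vg i \<inter> Vg j = {})"

definition submodular_on :: "'a set \<Rightarrow> ('a set \<Rightarrow> real) \<Rightarrow> bool" where
  "submodular_on V f \<longleftrightarrow>
     (\<forall>A B. A \<subseteq> V \<longrightarrow> B \<subseteq> V \<longrightarrow> f (A \<union> B) + f (A \<inter> B) \<le> f A + f B)"

definition feasible_P2 :: "'a set \<Rightarrow> nat \<Rightarrow> (nat \<Rightarrow> 'a set) \<Rightarrow> nat \<Rightarrow> nat \<Rightarrow> 'a set \<Rightarrow> bool" where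
  "feasible_P2 V m Vg \<alpha> c S \<longleftrightarrow>
     S \<subseteq> V \<and>
     (\<forall>i\<in>{1..m}. \<forall>j\<in>{1..m}. int (card (S \<inter> Vg i)) - int (card (S \<inter> Vg j)) \<le> int \<alpha>) \<and>
     card S \<le> c"

definition optimal_P2 :: "'a set \<Rightarrow> nat \<Rightarrow> (nat \<Rightarrow> 'a set) \<Rightarrow> nat \<Rightarrow> nat \<Rightarrow> ('a set \<Rightarrow> real) \<Rightarrow> 'a set \<Rightarrow> bool" where
  "optimal_P2 V m Vg \<alpha> c f OPT \<longleftrightarrow>
     feasible_P2 V m Vg \<alpha> c OPT \<and> (\<forall>S. feasible_P2 V m Vg \<alpha> c S \<longrightarrow> f S \<le> f OPT)"

definition feasible_P21 :: "'a set \<Rightarrow> nat \<Rightarrow> (nat \<Rightarrow> 'a set) \<Rightarrow> nat \<Rightarrow> nat \<Rightarrow> nat \<Rightarrow> 'a set \<Rightarrow> bool" where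
  "feasible_P21 V m Vg \<alpha> c z S \<longleftrightarrow>
     S \<subseteq> V \<and>
     (\<forall>i\<in>{1..m}. z \<le> card (S \<inter> Vg i) \<and> card (S \<inter> Vg i) \<le> z + \<alpha>) \<and>
     card S \<le> c"

definition feasible_P22 :: "'a set \<Rightarrow> nat \<Rightarrow> (nat \<Rightarrow> 'a set) \<Rightarrow> nat \<Rightarrow> nat \<Rightarrow> nat \<Rightarrow> 'a set \<Rightarrow> bool" where
  "feasible_P22 V m Vg \<alpha> c z S \<longleftrightarrow>
     S \<subseteq> V \<and>
     (\<forall>i\<in>{1..m}. card (S \<inter> Vg i) \<le> z + \<alpha>) \<and>
     (\<Sum>i\<in>{1..m}. max z (card (S \<inter> Vg i))) \<le> c"

definition deficient :: "nat \<Rightarrow> (nat \<Rightarrow> 'a set) \<Rightarrow> nat \<Rightarrow> 'a set \<Rightarrow> nat set" where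
  "deficient m Vg z A = {i\<in>{1..m}. card (A \<inter> Vg i) < z}"

definition completion :: "('a set \<Rightarrow> real) \<Rightarrow> nat \<Rightarrow> (nat \<Rightarrow> 'a set) \<Rightarrow> nat \<Rightarrow> 'a set
    \<Rightarrow> (nat \<Rightarrow> 'a set) \<Rightarrow> (nat \<Rightarrow> 'a set) \<Rightarrow> 'a set" where
  "completion f m Vg z A X Y =
     (let L = deficient m Vg z A;
          A1 = A \<union> (\<Union>i\<in>L. X i);
          A2 = A \<union> (\<Union>i\<in>L. Y i)
      in if f A2 \<le> f A1 then A1 else A2)"

end

theory Submission
  imports Defs
begin

lemma completion_aux:
  fixes V :: "'a set" and Vg :: "nat \<Rightarrow> 'a set" and W :: "nat \<Rightarrow> 'a set"
  assumes fin: "finite V"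
    and part: "is_partition V m Vg"
    and feas: "feasible_P22 V m Vg \<alpha> c z A"
    and W: "\<forall>i\<in>deficient m Vg z A. W i \<subseteq> Vg i - A \<and> card (W i) = z - card (A \<inter> Vg i)"
  shows "feasible_P21 V m Vg \<alpha> c z (A \<union> (\<Union>i\<in>deficient m Vg z A. W i))
       \<and> feasible_P2 V m Vg \<alpha> c (A \<union> (\<Union>i\<in>deficient m Vg z A. W i))"
proof -
  define L where "L = deficient m Vg z A"
  define B where "B = A \<union> (\<Union>i\<in>L. W i)"
  have Lsub: "L \<subseteq> {1..m}" unfolding L_def deficient_def by auto
  have VU: "(\<Union>i\<in>{1..m}. Vg i) = V" and disj: "\<And>i j. i \<in> {1..m} \<Longrightarrow> j \<in> {1..m} \<Longrightarrow> i \<noteq> j \<Longrightarrow> Vg i \<inter> Vg j = {}"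
    using part unfolding is_partition_def by auto
  have AV: "A \<subseteq> V" using feas unfolding feasible_P22_def by auto
  have WV: "\<And>i. i \<in> L \<Longrightarrow> W i \<subseteq> Vg i" using W unfolding L_def by auto
  have BV: "B \<subseteq> V" unfolding B_def using AV WV Lsub VU by blast
  have finB: "finite B" by (rule finite_subset[OF BV fin])
  have finA: "finite A" by (rule finite_subset[OF AV fin])
  have cardi: "card (B \<inter> Vg i) = max z (card (A \<inter> Vg i))" if i: "i \<in> {1..m}" for i
  proof -
    have other: "W j \<inter> Vg i = {}" if "j \<in> L" "j \<noteq> i" for j
      using WV[OF that(1)] disj[OF i, of j] that Lsub by blast
    show ?thesis
    proof (cases "i \<in> L")
      case True
      have eq: "B \<inter> Vg i = (A \<inter> Vg i) \<union> W i"
        unfolding B_def using WV[OF True] other True by blast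
      have fA: "finite (A \<inter> Vg i)" using finA by simp
      have WiV: "W i \<subseteq> V" using WV[OF True] VU i by blast
      have fW: "finite (W i)" by (rule finite_subset[OF WiV fin])
      have dj: "(A \<inter> Vg i) \<inter> W i = {}" using W True unfolding L_def by blast
      have lt: "card (A \<inter> Vg i) < z" using True unfolding L_def deficient_def by auto
      have "card (B \<inter> Vg i) = card (A \<inter> Vg i) + card (W i)"
        unfolding eq using card_Un_disjoint[OF fA fW dj] .
      also have "\<dots> = z" using W True lt unfolding L_def by auto
      finally show ?thesis using lt by simp
    next
      case False
      have eq: "B \<inter> Vg i = A \<inter> Vg i"
        unfolding B_def using other False by blast
      have "\<not> card (A \<inter> Vg i) < z" using False i unfolding L_def deficient_def by auto
      then show ?thesis using eq by simp
    qed
  qed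
  have bounds: "z \<le> card (B \<inter> Vg i) \<and> card (B \<inter> Vg i) \<le> z + \<alpha>" if i: "i \<in> {1..m}" for i
    using cardi[OF i] feas i unfolding feasible_P22_def by auto
  have Bdecomp: "B = (\<Union>i\<in>{1..m}. B \<inter> Vg i)" using BV VU by blast
  have cU: "card (\<Union>i\<in>{1..m}. B \<inter> Vg i) = (\<Sum>i\<in>{1..m}. card (B \<inter> Vg i))"
  proof (rule card_UN_disjoint)
    show "finite {1..m}" by simp
    show "\<forall>i\<in>{1..m}. finite (B \<inter> Vg i)" using finB by simp
    show "\<forall>i\<in>{1..m}. \<forall>j\<in>{1..m}. i \<noteq> j \<longrightarrow> (B \<inter> Vg i) \<inter> (B \<inter> Vg j) = {}"
      using disj by blast
  qed
  have "card B = (\<Sum>i\<in>{1..m}. card (B \<inter> Vg i))" using cU by (simp only: Bdecomp[symmetric])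
  also have "\<dots> = (\<Sum>i\<in>{1..m}. max z (card (A \<inter> Vg i)))"
    using cardi by (intro sum.cong) auto
  also have "\<dots> \<le> c" using feas unfolding feasible_P22_def by auto
  finally have cB: "card B \<le> c" .
  have P21: "feasible_P21 V m Vg \<alpha> c z B"
    unfolding feasible_P21_def using BV bounds cB by auto
  have P2: "feasible_P2 V m Vg \<alpha> c B"
  proof -
    have "int (card (B \<inter> Vg i)) - int (card (B \<inter> Vg j)) \<le> int \<alpha>"
      if "i \<in> {1..m}" "j \<in> {1..m}" for i j
      using bounds[OF that(1)] bounds[OF that(2)] by linarith
    then show ?thesis unfolding feasible_P2_def using BV cB by auto
  qed
  show ?thesis using P21 P2 unfolding B_def L_def by simp
qed

theorem lemma15:
  fixes V :: "'a set" and m :: nat and Vg :: "nat \<Rightarrow> 'a set"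
    and \<alpha> c z :: nat and f :: "'a set \<Rightarrow> real"
    and OPT A :: "'a set" and X Y :: "nat \<Rightarrow> 'a set"
  assumes "finite V"
    and "m \<ge> 1"
    and "is_partition V m Vg"
    and "c > 0"
    and "\<forall>S. S \<subseteq> V \<longrightarrow> f S \<ge> 0"
    and "submodular_on V f"
    and "optimal_P2 V m Vg \<alpha> c f OPT"
    and "z = Min ((\<lambda>i. card (OPT \<inter> Vg i) div 2) ` {1..m})"
    and "feasible_P22 V m Vg \<alpha> c z A"
    and "\<forall>i\<in>deficient m Vg z A.
           X i \<subseteq> Vg i - A \<and> Y i \<subseteq> Vg i - A \<and> X i \<inter> Y i = {} \<and>
           card (X i) = z - card (A \<inter> Vg i) \<and> card (Y i) = z - card (A \<inter> Vg i)"
  shows "feasible_P21 V m Vg \<alpha> c z (completion f m Vg z A X Y)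
       \<and> feasible_P2 V m Vg \<alpha> c (completion f m Vg z A X Y)"
proof -
  have X: "\<forall>i\<in>deficient m Vg z A. X i \<subseteq> Vg i - A \<and> card (X i) = z - card (A \<inter> Vg i)"
    using assms(10) by blast
  have Y: "\<forall>i\<in>deficient m Vg z A. Y i \<subseteq> Vg i - A \<and> card (Y i) = z - card (A \<inter> Vg i)"
    using assms(10) by blast
  note hX = completion_aux[OF assms(1) assms(3) assms(9) X]
  note hY = completion_aux[OF assms(1) assms(3) assms(9) Y]
  show ?thesis unfolding completion_def Let_def using hX hY by simp
qed

end
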